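(* For every integer $n \ge 0$, every point $z \in \overline{D}(-\tfrac12 + 2^{2n}, 2^{-(2n+1)})$ has unbounded forward orbit under $f_1(z) = 3z^3 - \tfrac92 z^2 + 1$.
   Context: Let $|\cdot|$ denote the $2$-adic absolute value on $\mathbb{C}_2$, normalized by $|2| = 1/2$. The notation $\overline{D}(a,\delta)$ denotes the closed disk $\{z \in \mathbb{C}_2 : |z-a| \le \delta\}$. Here $f_1$ is the member with $t=1$ of the family $f_t(z) = -\tfrac32 t(-2z^3+3z^2)+1$. *)

theory Defs
  imports Complex_Main "HOL-Computational_Algebra.Polynomial"
begin

text \<open>We axiomatise the structure
  (K, abs) abstractly: K a field, abs a non-archimedean absolute value on K with
  abs 2 = 1/2 (so on Q it restricts to the 2-adic absolute value), K complete with
  respect to abs and algebraically closed. C_2 is an instance.\<close>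

definition two_adic_C2_like :: "('a::field_char_0 \<Rightarrow> real) \<Rightarrow> bool" where
  "two_adic_C2_like av \<longleftrightarrow>
     (\<forall>x. av x \<ge> 0) \<and>
     (\<forall>x. av x = 0 \<longleftrightarrow> x = 0) \<and>
     (\<forall>x y. av (x * y) = av x * av y) \<and>
     (\<forall>x y. av (x + y) \<le> max (av x) (av y)) \<and>
     av 2 = 1/2 \<and>
     (\<forall>s :: nat \<Rightarrow> 'a.
        (\<forall>e>0. \<exists>N. \<forall>m\<ge>N. \<forall>n\<ge>N. av (s m - s n) < e) \<longrightarrow>
        (\<exists>L. \<forall>e>0. \<exists>N. \<forall>n\<ge>N. av (s n - L) < e)) \<and>
     (\<forall>p :: 'a poly. degree p > 0 \<longrightarrow> (\<exists>x. poly p x = 0))"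

definition f_fam :: "'a::field_char_0 \<Rightarrow> 'a \<Rightarrow> 'a" where
  "f_fam t z = -(3/2) * t * (-2 * z^3 + 3 * z^2) + 1"

definition cdisk :: "('a::field_char_0 \<Rightarrow> real) \<Rightarrow> 'a \<Rightarrow> real \<Rightarrow> 'a set" where
  "cdisk av a \<delta> = {z. av (z - a) \<le> \<delta>}"

definition unbounded_orbit :: "('a \<Rightarrow> real) \<Rightarrow> ('a \<Rightarrow> 'a) \<Rightarrow> 'a \<Rightarrow> bool" where
  "unbounded_orbit av f z \<longleftrightarrow> \<not> (\<exists>B. \<forall>k. av ((f ^^ k) z) \<le> B)"

end

theory Submission
  imports Defs
begin

lemma av_basic:
  assumes "two_adic_C2_like av"
  shows "\<And>x. av x \<ge> 0" "\<And>x. av x = 0 \<longleftrightarrow> x = 0" "\<And>x y. av (x*y) = av x * av y"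
    "\<And>x y. av (x+y) \<le> max (av x) (av y)" "av 2 = 1/2"
  using assms unfolding two_adic_C2_like_def by auto

lemma av_one: assumes "two_adic_C2_like av" shows "av 1 = 1"
proof -
  have "av 1 = av 1 * av 1" using av_basic(3)[OF assms, of 1 1] by simp
  moreover have "av 1 \<noteq> 0" using av_basic(2)[OF assms] by simp
  ultimately show ?thesis by (metis mult_cancel_right1)
qed

lemma av_neg: assumes "two_adic_C2_like av" shows "av (-x) = av x"
proof -
  have "av (-1) * av (-1) = 1" using av_basic(3)[OF assms, of "-1" "-1"] av_one[OF assms] by simp
  moreover have "av (-1) \<ge> 0" using av_basic(1)[OF assms] by simp
  ultimately have "av (-1) = 1"
    by (metis mult_le_cancel_right1 mult_less_cancel_right1 nle_le not_less)
  then show ?thesis using av_basic(3)[OF assms, of "-1" x] by simp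
qed

lemma av_diff: assumes "two_adic_C2_like av" shows "av (x - y) \<le> max (av x) (av y)"
  using av_basic(4)[OF assms, of x "-y"] av_neg[OF assms, of y] by simp

lemma av_strict: assumes "two_adic_C2_like av" and "av b < av a" shows "av (a + b) = av a"
proof -
  have 1: "av (a+b) \<le> av a" using av_basic(4)[OF assms(1), of a b] assms(2) by simp
  have "av a \<le> max (av (a+b)) (av (-b))" using av_basic(4)[OF assms(1), of "a+b" "-b"] by simp
  then have "av a \<le> av (a+b)" using av_neg[OF assms(1), of b] assms(2) by auto
  with 1 show ?thesis by simp
qed

lemma av_pow: assumes "two_adic_C2_like av" shows "av (x^n) = av x ^ n"
  by (induction n) (simp_all add: av_one[OF assms] av_basic(3)[OF assms])

lemma av_nat: assumes "two_adic_C2_like av" shows "av (of_nat n) \<le> 1"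
proof (induction n)
  case 0 then show ?case using av_basic(2)[OF assms, of 0] by simp
next
  case (Suc n)
  have "av (of_nat (Suc n)) \<le> max (av (of_nat n)) (av 1)"
    using av_basic(4)[OF assms, of "of_nat n" 1] by (simp add: add.commute)
  then show ?case using Suc av_one[OF assms] by simp
qed

lemma av_numeral: assumes "two_adic_C2_like av" shows "av (numeral k) \<le> 1"
  using av_nat[OF assms, of "numeral k"] by simp

lemma av_div: assumes "two_adic_C2_like av" and "y \<noteq> 0" shows "av (x / y) = av x / av y"
proof -
  have "av (x / y) * av y = av x" using av_basic(3)[OF assms(1), of "x/y" y] assms(2) by simp
  moreover have "av y \<noteq> 0" using av_basic(2)[OF assms(1)] assms(2) by simp
  ultimately show ?thesis by (simp add: field_simps)
qed

lemma av_4: assumes "two_adic_C2_like av" shows "av (4::'a::field_char_0) = 1/4"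
  using av_basic(3)[OF assms, of 2 2] av_basic(5)[OF assms] by simp

lemma av_27: assumes "two_adic_C2_like av" shows "av (27::'a::field_char_0) = 1"
proof -
  have "av (26::'a) = av 2 * av (13::'a)" using av_basic(3)[OF assms, of 2 13] by simp
  then have "av (26::'a) \<le> 1/2" using av_numeral[OF assms, of "Num.Bit1 (Num.Bit0 (Num.Bit1 Num.One))"] av_basic(5)[OF assms]
    av_basic(1)[OF assms, of 13] by simp
  then have "av ((1::'a) + 26) = 1" using av_strict[OF assms, of 26 1] av_one[OF assms] by simp
  then show ?thesis by simp
qed

lemma f_u: "f_fam 1 z + 1/2 = (27/4) * (z+1/2) - 9*(z+1/2)^2 + 3*(z+1/2)^3"
  unfolding f_fam_def by (simp add: field_simps power2_eq_square power3_eq_cube)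

lemma av_3: assumes "two_adic_C2_like av" shows "av (3::'a::field_char_0) = 1"
  using av_strict[OF assms, of 2 1] av_one[OF assms] av_basic(5)[OF assms] by simp

lemma escape:
  assumes A: "two_adic_C2_like av" and z: "av z \<ge> 4"
  shows "av (f_fam 1 z) \<ge> 4 * av z"
proof -
  have eq: "f_fam 1 z = 3*z^3 + (1 - (9/2)*z^2)" unfolding f_fam_def by (simp add: field_simps)
  have a3: "av (3*z^3) = av z ^ 3" using av_basic(3)[OF A] av_3[OF A] av_pow[OF A] by simp
  have a92: "av ((9/2)::'a) \<le> 2" using av_div[OF A, of 2 9] av_numeral[OF A, of "Num.Bit1 (Num.Bit0 (Num.Bit0 Num.One))"] av_basic(5)[OF A] by simp
  have "av ((9/2)*z^2) = av ((9/2)::'a) * av z ^ 2" using av_basic(3)[OF A, of "9/2" "z^2"] av_pow[OF A] by (simp del: times_divide_eq_left)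
  also have "... \<le> 2 * av z ^ 2" using a92 av_basic(1)[OF A, of z] by (simp add: mult_right_mono)
  finally have b: "av ((9/2)*z^2) \<le> 2 * av z ^ 2" .
  have "av (1 - (9/2)*z^2) \<le> max 1 (2 * av z ^ 2)" using av_diff[OF A, of 1 "(9/2)*z^2"] b av_one[OF A] by simp
  moreover have "max 1 (2 * av z ^ 2) < av z ^ 3"
  proof -
    have "2 * av z ^ 2 < av z * av z ^ 2" using z by (intro mult_strict_right_mono) auto
    moreover have "1 < av z ^ 2" using z by (smt (verit) one_less_power zero_less_numeral)
    moreover have "av z ^ 2 \<le> av z * av z ^ 2" using z by (intro mult_le_cancel_right1[THEN iffD2]) auto
    ultimately show ?thesis by (simp add: power3_eq_cube power2_eq_square)
  qed
  ultimately have lt: "av (1 - (9/2)*z^2) < av (3*z^3)" using a3 by linarith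
  have "av (f_fam 1 z) = av (3*z^3)" unfolding eq by (rule av_strict[OF A lt])
  then have "av (f_fam 1 z) = av z ^ 3" using a3 by simp
  moreover have "4 * av z \<le> av z ^ 3"
  proof -
    have "4 * 1 \<le> av z * av z" using z by (intro mult_mono) auto
    then have "4 * av z \<le> (av z * av z) * av z" using z by (intro mult_right_mono) auto
    then show ?thesis by (simp add: power3_eq_cube)
  qed
  ultimately show ?thesis by simp
qed

lemma escape_iter:
  assumes A: "two_adic_C2_like av" and z: "av z \<ge> 4"
  shows "av ((f_fam 1 ^^ j) z) \<ge> 4^j * av z"
proof (induction j)
  case 0 then show ?case by simp
next
  case (Suc j)
  have "(1::real) \<le> 4^j" by simp
    then have "1 * av z \<le> 4^j * av z" using av_basic(1)[OF A, of z] by (intro mult_right_mono)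
    then have "4 \<le> 4^j * av z" using z by linarith
  then have "4 \<le> av ((f_fam 1 ^^ j) z)" using Suc by linarith
  then have "av (f_fam 1 ((f_fam 1 ^^ j) z)) \<ge> 4 * av ((f_fam 1 ^^ j) z)" by (rule escape[OF A])
  moreover have "4 * (4^j * av z) \<le> 4 * av ((f_fam 1 ^^ j) z)" using Suc by linarith
  ultimately show ?case by simp
qed

lemma av_sum4:
  assumes A: "two_adic_C2_like av" and "av a \<le> B" "av b \<le> B" "av c \<le> B" "av d \<le> B"
  shows "av (a + b - c + d) \<le> B"
proof -
  have "av (a+b) \<le> B" using av_basic(4)[OF A, of a b] assms by simp
  then have "av (a+b-c) \<le> B" using av_diff[OF A, of "a+b" c] assms by simp
  then show ?thesis using av_basic(4)[OF A, of "a+b-c" d] assms by simp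
qed

lemma step:
  assumes A: "two_adic_C2_like av"
    and h: "av ((z + 1/2) - 4^(Suc m)) \<le> 1/2^(2*m+3)"
  shows "av ((f_fam 1 z + 1/2) - 4^m) \<le> 1/2^(2*m+1)"
proof -
  define u where "u = z + 1/2"
  define w where "w = u - 4^(Suc m)"
  define r :: real where "r = (1/4)^m"
  have r0: "0 \<le> r" "r \<le> 1" unfolding r_def by (auto simp: power_le_one)
  have e1: "(1::real)/2^(2*m+3) = r/8" unfolding r_def by (simp add: power_add power_mult power_divide)
  have e2: "(1::real)/2^(2*m+1) = r/2" unfolding r_def by (simp add: power_add power_mult power_divide)
  have aw: "av w \<le> r/8" using h e1 unfolding w_def u_def by simp
  have a4m: "av ((4::'a)^m) = r" unfolding r_def using av_pow[OF A, of "4::'a" m] av_4[OF A] by (simp only:)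
  have eq: "f_fam 1 z + 1/2 - 4^m = 26*4^m + (27/4)*w - 9*u^2 + 3*u^3"
    unfolding w_def u_def f_u by (simp add: algebra_simps)
  have t1: "av (26*(4::'a)^m) \<le> r/2"
  proof -
    have "av (26::'a) = av 2 * av (13::'a)" using av_basic(3)[OF A, of 2 13] by simp
    then have "av (26::'a) \<le> 1/2" using av_numeral[OF A, of "Num.Bit1 (Num.Bit0 (Num.Bit1 Num.One))"] av_basic(5)[OF A]
      av_basic(1)[OF A, of 13] by simp
    then have "av (26::'a) * r \<le> (1/2) * r" using r0 by (intro mult_right_mono)
    then show ?thesis using av_basic(3)[OF A, of 26 "4^m"] a4m by simp
  qed
  have t2: "av ((27/4)*w) \<le> r/2"
  proof -
    have "av ((27/4)::'a) = 4" using av_div[OF A, of 4 27] av_27[OF A] av_4[OF A] by simp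
    then have "av ((27/4)*w) = 4 * av w" using av_basic(3)[OF A, of "27/4" w] by (simp del: times_divide_eq_left)
    then show ?thesis using aw by simp
  qed
  have au: "av u \<le> r/4"
  proof -
    have "u = 4^(Suc m) + w" unfolding w_def by simp
    moreover have "av ((4::'a)^(Suc m)) = r/4" using a4m av_basic(3)[OF A, of 4 "4^m"] av_4[OF A] by simp
    ultimately show ?thesis using av_basic(4)[OF A, of "4^(Suc m)" w] aw r0 by simp
  qed
  have au0: "0 \<le> av u" using av_basic(1)[OF A] by simp
  have au1: "av u \<le> 1" using au r0 by simp
  have t3: "av (9*u^2) \<le> r/2"
  proof -
    have n9: "av (9::'a) \<le> 1" using av_numeral[OF A, of "Num.Bit1 (Num.Bit0 (Num.Bit0 Num.One))"] by simp
    have "av (9*u^2) = av (9::'a) * av u ^ 2" using av_basic(3)[OF A, of 9 "u^2"] av_pow[OF A, of u 2] by simp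
    also have "... \<le> 1 * av u ^ 2" using n9 by (intro mult_right_mono) auto
    finally have "av (9*u^2) \<le> av u ^ 2" by simp
    also have "... \<le> av u" using au0 au1 by (simp add: power2_eq_square mult_left_le_one_le)
    finally show ?thesis using au r0 by simp
  qed
  have t4: "av (3*u^3) \<le> r/2"
  proof -
    have "av (3*u^3) = av u ^ 3" using av_basic(3)[OF A, of 3 "u^3"] av_pow[OF A, of u 3] av_3[OF A] by simp
    also have "... \<le> av u" using au0 au1 by (simp add: power3_eq_cube mult_left_le_one_le mult_le_one)
    finally show ?thesis using au r0 by simp
  qed
  show ?thesis unfolding eq e2 by (rule av_sum4[OF A t1 t2 t3 t4])
qed

lemma base:
  assumes A: "two_adic_C2_like av" and h: "av ((z + 1/2) - 1) \<le> 1/2"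
  shows "av (f_fam 1 z) \<ge> 4"
proof -
  define u where "u = z + 1/2"
  have hu: "av (u - 1) < av 1" using h av_one[OF A] unfolding u_def by simp
  have "av (1 + (u - 1)) = av 1" using av_strict[OF A hu] .
  then have au: "av u = 1" using av_one[OF A] by simp
  have eq: "f_fam 1 z = (27/4)*u + (-(1/2) - 9*u^2 + 3*u^3)"
    using f_u[of z] unfolding u_def by (simp add: algebra_simps)
  have a1: "av ((27/4)*u) = 4"
  proof -
    have "av ((27/4)::'a) = 4" using av_div[OF A, of 4 27] av_27[OF A] av_4[OF A] by simp
    then show ?thesis using av_basic(3)[OF A, of "27/4" u] au by (simp del: times_divide_eq_left)
  qed
  have ah: "av (1/2::'a) = 2" using av_div[OF A, of 2 1] av_one[OF A] av_basic(5)[OF A] by simp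
  have a9: "av (9*u^2) \<le> 2"
    using av_basic(3)[OF A, of 9 "u^2"] av_pow[OF A, of u 2] au
      av_numeral[OF A, of "Num.Bit1 (Num.Bit0 (Num.Bit0 Num.One))"] by simp
  have a3: "av (3*u^3) \<le> 2"
    using av_basic(3)[OF A, of 3 "u^3"] av_pow[OF A, of u 3] au av_3[OF A] by simp
  have "av (-(1/2) - 9*u^2) \<le> 2" using av_diff[OF A, of "-(1/2)" "9*u^2"] av_neg[OF A, of "1/2"] ah a9 by simp
  then have "av (-(1/2) - 9*u^2 + 3*u^3) \<le> 2" using av_basic(4)[OF A, of "-(1/2) - 9*u^2" "3*u^3"] a3 by simp
  then have "av (-(1/2) - 9*u^2 + 3*u^3) < av ((27/4)*u)" using a1 by simp
  from av_strict[OF A this] have "av (f_fam 1 z) = 4" unfolding eq using a1 by simp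
  then show ?thesis by simp
qed

lemma reach:
  assumes A: "two_adic_C2_like av"
  shows "av ((z + 1/2) - 4^n) \<le> 1/2^(2*n+1) \<Longrightarrow> \<exists>k. av ((f_fam 1 ^^ k) z) \<ge> 4"
proof (induction n arbitrary: z)
  case 0
  then have "av (f_fam 1 z) \<ge> 4" using base[OF A, of z] by simp
  then show ?case by (intro exI[of _ 1]) simp
next
  case (Suc m)
  have "av ((z + 1/2) - 4^(Suc m)) \<le> 1/2^(2*m+3)" using Suc.prems by (simp add: numeral_3_eq_3)
  from step[OF A this] have "av ((f_fam 1 z + 1/2) - 4^m) \<le> 1/2^(2*m+1)" .
  from Suc.IH[OF this] obtain k where "av ((f_fam 1 ^^ k) (f_fam 1 z)) \<ge> 4" by blast
  then have "av ((f_fam 1 ^^ Suc k) z) \<ge> 4" by (simp only: funpow_Suc_right o_apply)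
  then show ?case by blast
qed

theorem mainTheorem8:
  fixes av :: "'a::field_char_0 \<Rightarrow> real" and n :: nat and z :: 'a
  assumes "two_adic_C2_like av"
    and "z \<in> cdisk av (-(1/2) + 2 ^ (2*n)) (1 / 2 ^ (2*n+1))"
  shows "unbounded_orbit av (f_fam 1) z"
proof -
  note A = assms(1)
  have e: "(z + 1/2) - (4::'a)^n = z - (-(1/2) + 2 ^ (2*n))" by (simp add: power_mult)
  have "av ((z + 1/2) - 4^n) \<le> 1/2^(2*n+1)" unfolding e using assms(2) unfolding cdisk_def by (simp only: mem_Collect_eq)
  from reach[OF A this] obtain k where k: "av ((f_fam 1 ^^ k) z) \<ge> 4" by blast
  show ?thesis unfolding unbounded_orbit_def
  proof
    assume "\<exists>B. \<forall>k. av ((f_fam 1 ^^ k) z) \<le> B"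
    then obtain B where B: "\<And>k. av ((f_fam 1 ^^ k) z) \<le> B" by blast
    obtain j where j: "B < (4::real)^j" using real_arch_pow[of 4 B] by auto
    have "av ((f_fam 1 ^^ j) ((f_fam 1 ^^ k) z)) \<ge> 4^j * av ((f_fam 1 ^^ k) z)"
      by (rule escape_iter[OF A k])
    moreover have "4^j * av ((f_fam 1 ^^ k) z) \<ge> 4^j * 1" using k by (intro mult_left_mono) auto
    moreover have "(f_fam 1 ^^ j) ((f_fam 1 ^^ k) z) = (f_fam 1 ^^ (j+k)) z" by (simp add: funpow_add)
    ultimately have "av ((f_fam 1 ^^ (j+k)) z) \<ge> 4^j * 1" by (metis order_trans)
    with B[of "j+k"] j show False by simp
  qed
qed

end
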